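(* Let $\nu_0,\nu_1,\nu_2,\dots$ be probability measures on $[0,1]$ with $\nu_n\ll\nu_0$ for all $n\ge1$, and suppose $\sum_{n=1}^\infty d(\nu_n,\nu_0)<\infty$ for some $d\in\mathcal{D}$. Then the product measures on $[0,1]^{\mathbb{N}}$ satisfy $\prod_{n=1}^\infty\nu_n\ll\prod_{n=1}^\infty\nu_0$.
   Context: $\nu\ll\nu'$ denotes absolute continuity. Hellinger integral: for probability measures $\nu,\nu'$ on $[0,1]$, $H(\nu,\nu')=\int_{[0,1]}\sqrt{\frac{d\nu}{d\tau}\frac{d\nu'}{d\tau}}\,d\tau$ for any measure $\tau$ with $\nu,\nu'\ll\tau$. Class $\mathcal{D}$: a function $d$ on pairs of probability measures on $[0,1]$ which is either a divergence ($d(\nu,\nu')\ge0$ with equality iff $\nu=\nu'$) or a distance (metric) belongs to $\mathcal{D}$ if there is a constant $C>0$ with $1-H(\nu,\nu')\le C\,d(\nu,\nu')$ for all $\nu,\nu'$. *)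

theory Defs
  imports "HOL-Probability.Probability"
begin

definition unit_borel :: "real measure" where
  "unit_borel = restrict_space borel {0..1}"

definition prob_on_unit :: "real measure \<Rightarrow> bool" where
  "prob_on_unit \<nu> \<longleftrightarrow> prob_space \<nu> \<and> sets \<nu> = sets unit_borel"

definition dom_measure :: "real measure \<Rightarrow> real measure \<Rightarrow> real measure" where
  "dom_measure \<nu> \<nu>' = measure_of (space \<nu>) (sets \<nu>) (\<lambda>A. emeasure \<nu> A + emeasure \<nu>' A)"

definition hellinger :: "real measure \<Rightarrow> real measure \<Rightarrow> real" where
  "hellinger \<nu> \<nu>' = enn2real (\<integral>\<^sup>+ x. ennreal (sqrt (enn2real (RN_deriv (dom_measure \<nu> \<nu>') \<nu> x)
        * enn2real (RN_deriv (dom_measure \<nu> \<nu>') \<nu>' x))) \<partial>(dom_measure \<nu> \<nu>'))"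

definition is_divergence :: "(real measure \<Rightarrow> real measure \<Rightarrow> ereal) \<Rightarrow> bool" where
  "is_divergence d \<longleftrightarrow> (\<forall>\<nu> \<nu>'. prob_on_unit \<nu> \<longrightarrow> prob_on_unit \<nu>' \<longrightarrow>
      d \<nu> \<nu>' \<ge> 0 \<and> (d \<nu> \<nu>' = 0 \<longleftrightarrow> \<nu> = \<nu>'))"

definition is_distance :: "(real measure \<Rightarrow> real measure \<Rightarrow> ereal) \<Rightarrow> bool" where
  "is_distance d \<longleftrightarrow> (\<forall>\<nu> \<nu>' \<nu>''. prob_on_unit \<nu> \<longrightarrow> prob_on_unit \<nu>' \<longrightarrow> prob_on_unit \<nu>'' \<longrightarrow>
      \<bar>d \<nu> \<nu>'\<bar> \<noteq> \<infinity> \<and> d \<nu> \<nu>' \<ge> 0 \<and> (d \<nu> \<nu>' = 0 \<longleftrightarrow> \<nu> = \<nu>') \<and> d \<nu> \<nu>' = d \<nu>' \<nu>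
      \<and> d \<nu> \<nu>'' \<le> d \<nu> \<nu>' + d \<nu>' \<nu>'')"

definition class_D :: "(real measure \<Rightarrow> real measure \<Rightarrow> ereal) \<Rightarrow> bool" where
  "class_D d \<longleftrightarrow> (is_divergence d \<or> is_distance d) \<and>
     (\<exists>C>0. \<forall>\<nu> \<nu>'. prob_on_unit \<nu> \<longrightarrow> prob_on_unit \<nu>' \<longrightarrow>
        ereal (1 - hellinger \<nu> \<nu>') \<le> ereal C * d \<nu> \<nu>')"

end

theory Submission
  imports Defs
begin

lemma aux_mul1: "a \<ge> 0 \<Longrightarrow> ennreal (1 + a) * ennreal (a / (1 + a)) = ennreal (a::real)"
proof -
  assume a: "a \<ge> 0"
  have "ennreal (1 + a) * ennreal (a / (1 + a)) = ennreal ((1 + a) * (a / (1 + a)))"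
    using a by (intro ennreal_mult[symmetric]) auto
  also have "(1 + a) * (a / (1 + a)) = a" using a by simp
  finally show ?thesis .
qed

lemma aux_mul2: "a \<ge> 0 \<Longrightarrow> ennreal (1 + a) * ennreal (1 / (1 + a)) = 1" for a::real
proof -
  assume a: "a \<ge> 0"
  have "ennreal (1 + a) * ennreal (1 / (1 + a)) = ennreal ((1 + a) * (1 / (1 + a)))"
    using a by (intro ennreal_mult[symmetric]) auto
  also have "(1 + a) * (1 / (1 + a)) = 1" using a by simp
  finally show ?thesis by simp
qed

lemma hellinger_density:
  fixes M :: "real measure" and f :: "real \<Rightarrow> real"
  assumes M: "prob_space M" and f[measurable]: "f \<in> borel_measurable M" and f0: "\<And>x. f x \<ge> 0"
    and N: "N = density M (\<lambda>x. ennreal (f x))" and PN: "prob_space N"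
  shows "hellinger N M = enn2real (\<integral>\<^sup>+x. ennreal (sqrt (f x)) \<partial>M)"
proof -
  interpret M: prob_space M by fact
  define D where "D = density M (\<lambda>x. ennreal (1 + f x))"
  have sN: "sets N = sets M" "space N = space M" using N by auto
  have sD: "sets D = sets M" "space D = space M" using D_def by auto
  have eqf: "(\<lambda>A. emeasure N A + emeasure M A) = emeasure D"
  proof
    fix A show "emeasure N A + emeasure M A = emeasure D A"
    proof (cases "A \<in> sets M")
      case True
      have "emeasure D A = (\<integral>\<^sup>+x. ennreal (1 + f x) * indicator A x \<partial>M)"
        unfolding D_def using True by (simp add: emeasure_density)
      also have "\<dots> = (\<integral>\<^sup>+x. ennreal (f x) * indicator A x + indicator A x \<partial>M)"
        by (intro nn_integral_cong) (auto simp: f0 ennreal_plus[symmetric] indicator_def)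
      also have "\<dots> = (\<integral>\<^sup>+x. ennreal (f x) * indicator A x \<partial>M) + (\<integral>\<^sup>+x. indicator A x \<partial>M)"
        using True by (intro nn_integral_add) auto
      also have "\<dots> = emeasure N A + emeasure M A"
        using True N by (simp add: emeasure_density)
      finally show ?thesis by simp
    next
      case False
      then show ?thesis using sN sD by (simp add: emeasure_notin_sets)
    qed
  qed
  have tau: "dom_measure N M = D"
    unfolding dom_measure_def eqf sN sD[symmetric] by (rule measure_of_of_measure)
  have fin: "emeasure D (space D) \<noteq> \<infinity>"
  proof -
    have "emeasure D (space D) = emeasure N (space M) + emeasure M (space M)"
      using fun_cong[OF eqf, of "space M"] sD by simp
    also have "\<dots> = 2" using prob_space.emeasure_space_1[OF PN] M.emeasure_space_1 sN by simp
    finally show ?thesis by simp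
  qed
  interpret D: finite_measure D using fin by (rule finite_measureI)
  have dN: "density D (\<lambda>x. ennreal (f x / (1 + f x))) = N"
  proof -
    have "density D (\<lambda>x. ennreal (f x / (1 + f x))) = density M (\<lambda>x. ennreal (1 + f x) * ennreal (f x / (1 + f x)))"
      unfolding D_def by (rule density_density_eq) auto
    also have "\<dots> = N" unfolding N by (rule density_cong) (measurable, rule AE_I2, rule aux_mul1, rule f0)
    finally show ?thesis .
  qed
  have dM: "density D (\<lambda>x. ennreal (1 / (1 + f x))) = M"
  proof -
    have "density D (\<lambda>x. ennreal (1 / (1 + f x))) = density M (\<lambda>x. ennreal (1 + f x) * ennreal (1 / (1 + f x)))"
      unfolding D_def by (rule density_density_eq) auto
    also have "\<dots> = density M (\<lambda>x. 1)" by (rule density_cong) (measurable, rule AE_I2, rule aux_mul2, rule f0)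
    also have "\<dots> = M" by (simp add: density_1)
    finally show ?thesis .
  qed
  have aeN: "AE x in D. ennreal (f x / (1 + f x)) = RN_deriv D N x"
    by (rule D.RN_deriv_unique[OF _ dN]) (subst measurable_cong_sets[OF sD(1) refl], measurable)
  have aeM: "AE x in D. ennreal (1 / (1 + f x)) = RN_deriv D M x"
    by (rule D.RN_deriv_unique[OF _ dM]) (subst measurable_cong_sets[OF sD(1) refl], measurable)
  have "(\<integral>\<^sup>+ x. ennreal (sqrt (enn2real (RN_deriv D N x) * enn2real (RN_deriv D M x))) \<partial>D)
      = (\<integral>\<^sup>+ x. ennreal (1 + f x) * ennreal (sqrt (f x)/(1 + f x)) \<partial>M)"
  proof -
    have "(\<integral>\<^sup>+ x. ennreal (sqrt (enn2real (RN_deriv D N x) * enn2real (RN_deriv D M x))) \<partial>D)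
      = (\<integral>\<^sup>+ x. ennreal (sqrt (f x)/(1 + f x)) \<partial>D)"
    proof (rule nn_integral_cong_AE)
      show "AE x in D. ennreal (sqrt (enn2real (RN_deriv D N x) * enn2real (RN_deriv D M x))) = ennreal (sqrt (f x)/(1 + f x))"
        using aeN aeM
      proof eventually_elim
        case (elim x)
        have p: "1 + f x > 0" using f0[of x] by linarith
        have "enn2real (RN_deriv D N x) * enn2real (RN_deriv D M x) = (f x / (1 + f x)) * (1 / (1 + f x))"
          using elim(1)[symmetric] elim(2)[symmetric] p f0[of x] by simp
        also have "\<dots> = (sqrt (f x) / (1 + f x))^2" using p f0[of x] by (simp add: power_divide power2_eq_square)
        finally show ?case using p f0[of x] by simp
      qed
    qed
    also have "\<dots> = (\<integral>\<^sup>+ x. ennreal (1 + f x) * ennreal (sqrt (f x)/(1 + f x)) \<partial>M)"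
      unfolding D_def by (subst nn_integral_density) auto
    finally show ?thesis .
  qed
  also have "\<dots> = (\<integral>\<^sup>+x. ennreal (sqrt (f x)) \<partial>M)"
  proof (intro nn_integral_cong)
    fix x have p: "1 + f x > 0" using f0[of x] by linarith
    have "ennreal (1 + f x) * ennreal (sqrt (f x)/(1 + f x)) = ennreal ((1 + f x) * (sqrt (f x)/(1 + f x)))"
      using p f0[of x] by (intro ennreal_mult[symmetric]) auto
    then show "ennreal (1 + f x) * ennreal (sqrt (f x)/(1 + f x)) = ennreal (sqrt (f x))"
      using p by simp
  qed
  finally show ?thesis unfolding hellinger_def tau by simp
qed


lemma PiM_density_finite:
  fixes M0 :: "'a measure" and f :: "'i \<Rightarrow> 'a \<Rightarrow> real" and \<nu> :: "'i \<Rightarrow> 'a measure"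
  assumes M0: "prob_space M0" and nu: "\<And>i. \<nu> i = density M0 (\<lambda>x. ennreal (f i x))"
    and Pnu: "\<And>i. prob_space (\<nu> i)" and fm[measurable]: "\<And>i. f i \<in> borel_measurable M0"
    and f0: "\<And>i x. f i x \<ge> 0" and J: "finite J"
  shows "PiM J \<nu> = density (PiM J (\<lambda>_. M0)) (\<lambda>x. \<Prod>i\<in>J. ennreal (f i (x i)))"
proof -
  interpret nu: product_sigma_finite \<nu>
    unfolding product_sigma_finite_def using Pnu prob_space_imp_sigma_finite by blast
  interpret M0: product_sigma_finite "\<lambda>_. M0"
    unfolding product_sigma_finite_def using M0 prob_space_imp_sigma_finite by blast
  have sn: "sets (\<nu> i) = sets M0" for i using nu[of i] by simp
  have sP: "sets (PiM J \<nu>) = sets (PiM J (\<lambda>_. M0))" by (intro sets_PiM_cong) (auto simp: sn)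
  have spP: "space (PiM J \<nu>) = space (PiM J (\<lambda>_. M0))" using sP by (rule sets_eq_imp_space_eq)
  show ?thesis
  proof (rule nu.PiM_eqI[symmetric])
    show "finite J" by fact
    show "sets (density (Pi\<^sub>M J (\<lambda>_. M0)) (\<lambda>x. \<Prod>i\<in>J. ennreal (f i (x i)))) = sets (Pi\<^sub>M J \<nu>)"
      using sP by simp
    fix A assume A: "\<And>i. i \<in> J \<Longrightarrow> A i \<in> sets (\<nu> i)"
    then have A': "\<And>i. i \<in> J \<Longrightarrow> A i \<in> sets M0" using sn by auto
    have PA: "Pi\<^sub>E J A \<in> sets (Pi\<^sub>M J (\<lambda>_. M0))" using A' J by (intro sets_PiM_I_finite) auto
    have "emeasure (density (Pi\<^sub>M J (\<lambda>_. M0)) (\<lambda>x. \<Prod>i\<in>J. ennreal (f i (x i)))) (Pi\<^sub>E J A)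
        = (\<integral>\<^sup>+x. (\<Prod>i\<in>J. ennreal (f i (x i))) * indicator (Pi\<^sub>E J A) x \<partial>Pi\<^sub>M J (\<lambda>_. M0))"
      using PA by (subst emeasure_density) auto
    also have "\<dots> = (\<integral>\<^sup>+x. (\<Prod>i\<in>J. ennreal (f i (x i)) * indicator (A i) (x i)) \<partial>Pi\<^sub>M J (\<lambda>_. M0))"
    proof (intro nn_integral_cong)
      fix x assume "x \<in> space (Pi\<^sub>M J (\<lambda>_. M0))"
      then have ext: "x \<in> extensional J" by (auto simp: space_PiM PiE_def)
      have "indicator (Pi\<^sub>E J A) x = (\<Prod>i\<in>J. indicator (A i) (x i) :: ennreal)"
      proof (cases "\<forall>i\<in>J. x i \<in> A i")
        case True then show ?thesis using ext by (auto simp: indicator_def PiE_def Pi_def)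
      next
        case False
        then obtain i where "i \<in> J" "x i \<notin> A i" by auto
        then have "(\<Prod>i\<in>J. indicator (A i) (x i) :: ennreal) = 0"
          using J by (intro prod_zero) (auto intro!: bexI[of _ i])
        moreover have "x \<notin> Pi\<^sub>E J A" using \<open>i \<in> J\<close> \<open>x i \<notin> A i\<close> by auto
        ultimately show ?thesis by simp
      qed
      then show "(\<Prod>i\<in>J. ennreal (f i (x i))) * indicator (Pi\<^sub>E J A) x = (\<Prod>i\<in>J. ennreal (f i (x i)) * indicator (A i) (x i))"
        by (simp add: prod.distrib)
    qed
    also have "\<dots> = (\<Prod>i\<in>J. \<integral>\<^sup>+y. ennreal (f i y) * indicator (A i) y \<partial>M0)"
      using A' J by (intro M0.product_nn_integral_prod) auto
    also have "\<dots> = (\<Prod>i\<in>J. emeasure (\<nu> i) (A i))"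
      using A' by (intro prod.cong refl) (simp add: nu emeasure_density)
    finally show "emeasure (density (Pi\<^sub>M J (\<lambda>_. M0)) (\<lambda>x. \<Prod>i\<in>J. ennreal (f i (x i)))) (Pi\<^sub>E J A) = (\<Prod>i\<in>J. emeasure (\<nu> i) (A i))" .
  qed
qed

lemma int_prod_inf:
  fixes M0 :: "'a measure" and g :: "'i \<Rightarrow> 'a \<Rightarrow> real"
  assumes M0: "prob_space M0" and J: "finite J" "J \<subseteq> I"
    and g: "\<And>i. i \<in> J \<Longrightarrow> integrable M0 (g i)"
  shows "integrable (PiM I (\<lambda>_. M0)) (\<lambda>x. \<Prod>i\<in>J. g i (x i))"
    and "(\<integral>x. (\<Prod>i\<in>J. g i (x i)) \<partial>PiM I (\<lambda>_. M0)) = (\<Prod>i\<in>J. \<integral>y. g i y \<partial>M0)"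
proof -
  interpret P: product_prob_space "\<lambda>_. M0" I
    unfolding product_prob_space_def product_sigma_finite_def product_prob_space_axioms_def
    using M0 prob_space_imp_sigma_finite by blast
  have gm: "\<And>i. i \<in> J \<Longrightarrow> g i \<in> borel_measurable M0" using g by auto
  have m: "(\<lambda>y. \<Prod>i\<in>J. g i (y i)) \<in> borel_measurable (PiM J (\<lambda>_. M0))"
  proof (intro borel_measurable_prod ballI)
    fix i assume "i \<in> J"
    then show "(\<lambda>y. g i (y i)) \<in> borel_measurable (PiM J (\<lambda>_. M0))"
      using measurable_compose[OF measurable_component_singleton[of i J "\<lambda>_. M0"] gm[of i]] by simp
  qed
  have D: "distr (PiM I (\<lambda>_. M0)) (PiM J (\<lambda>_. M0)) (\<lambda>x. restrict x J) = PiM J (\<lambda>_. M0)"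
    using J by (rule P.distr_PiM_restrict_finite)
  have rm: "(\<lambda>x. restrict x J) \<in> measurable (PiM I (\<lambda>_. M0)) (PiM J (\<lambda>_. M0))"
    using J by (intro measurable_restrict_subset) auto
  have eqf: "(\<lambda>x. \<Prod>i\<in>J. g i (restrict x J i)) = (\<lambda>x. \<Prod>i\<in>J. g i (x i))"
    by (intro ext prod.cong) simp_all
  have "integrable (PiM J (\<lambda>_. M0)) (\<lambda>y. \<Prod>i\<in>J. g i (y i))"
    using J g by (intro P.product_integrable_prod) auto
  then show "integrable (PiM I (\<lambda>_. M0)) (\<lambda>x. \<Prod>i\<in>J. g i (x i))"
    using integrable_distr_eq[OF rm m, unfolded D eqf] by simp
  have "(\<integral>x. (\<Prod>i\<in>J. g i (x i)) \<partial>PiM I (\<lambda>_. M0)) = (\<integral>y. (\<Prod>i\<in>J. g i (y i)) \<partial>PiM J (\<lambda>_. M0))"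
    using integral_distr[OF rm m, unfolded D eqf] by simp
  also have "\<dots> = (\<Prod>i\<in>J. \<integral>y. g i y \<partial>M0)"
    using J g by (intro P.product_integral_prod) auto
  finally show "(\<integral>x. (\<Prod>i\<in>J. g i (x i)) \<partial>PiM I (\<lambda>_. M0)) = (\<Prod>i\<in>J. \<integral>y. g i y \<partial>M0)" .
qed

lemma emeasure_cyl:
  fixes M0 :: "'a measure" and f :: "'i \<Rightarrow> 'a \<Rightarrow> real" and \<nu> :: "'i \<Rightarrow> 'a measure"
  assumes M0: "prob_space M0" and nu: "\<And>i. \<nu> i = density M0 (\<lambda>x. ennreal (f i x))"
    and Pnu: "\<And>i. prob_space (\<nu> i)" and fm[measurable]: "\<And>i. f i \<in> borel_measurable M0"
    and f0: "\<And>i x. f i x \<ge> 0" and J: "finite J" "J \<subseteq> I"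
    and X: "X \<in> sets (PiM J (\<lambda>_. M0))"
  shows "emeasure (PiM I \<nu>) (prod_emb I (\<lambda>_. M0) J X) =
     (\<integral>\<^sup>+x. (\<Prod>i\<in>J. ennreal (f i (x i))) * indicator (prod_emb I (\<lambda>_. M0) J X) x \<partial>PiM I (\<lambda>_. M0))"
proof -
  interpret P: product_prob_space "\<lambda>_. M0" I
    unfolding product_prob_space_def product_sigma_finite_def product_prob_space_axioms_def
    using M0 prob_space_imp_sigma_finite by blast
  interpret Q: product_prob_space \<nu> I
    unfolding product_prob_space_def product_sigma_finite_def product_prob_space_axioms_def
    using Pnu prob_space_imp_sigma_finite by blast
  have sn: "sets (\<nu> i) = sets M0" "space (\<nu> i) = space M0" for i using nu[of i] by simp_all
  have sP: "sets (PiM J \<nu>) = sets (PiM J (\<lambda>_. M0))" by (intro sets_PiM_cong) (auto simp: sn)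
  have emb: "prod_emb I \<nu> J X = prod_emb I (\<lambda>_. M0) J X"
    unfolding prod_emb_def by (simp add: sn)
  have "emeasure (PiM I \<nu>) (prod_emb I \<nu> J X) = emeasure (PiM J \<nu>) X"
    using J X sP by (intro Q.emeasure_PiM_emb') auto
  also have "\<dots> = emeasure (density (PiM J (\<lambda>_. M0)) (\<lambda>x. \<Prod>i\<in>J. ennreal (f i (x i)))) X"
    by (subst PiM_density_finite[OF M0 nu Pnu fm f0 J(1)]) rule
  also have "\<dots> = (\<integral>\<^sup>+y. (\<Prod>i\<in>J. ennreal (f i (y i))) * indicator X y \<partial>PiM J (\<lambda>_. M0))"
    using X by (subst emeasure_density) auto
  also have "\<dots> = (\<integral>\<^sup>+x. (\<Prod>i\<in>J. ennreal (f i (restrict x J i))) * indicator X (restrict x J) \<partial>PiM I (\<lambda>_. M0))"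
  proof -
    have D: "distr (PiM I (\<lambda>_. M0)) (PiM J (\<lambda>_. M0)) (\<lambda>x. restrict x J) = PiM J (\<lambda>_. M0)"
      using J by (rule P.distr_PiM_restrict_finite)
    have rm: "(\<lambda>x. restrict x J) \<in> measurable (PiM I (\<lambda>_. M0)) (PiM J (\<lambda>_. M0))"
      using J by (intro measurable_restrict_subset) auto
    show ?thesis
      using nn_integral_distr[OF rm, unfolded D, of "\<lambda>y. (\<Prod>i\<in>J. ennreal (f i (y i))) * indicator X y"] X by simp
  qed
  also have "\<dots> = (\<integral>\<^sup>+x. (\<Prod>i\<in>J. ennreal (f i (x i))) * indicator (prod_emb I (\<lambda>_. M0) J X) x \<partial>PiM I (\<lambda>_. M0))"
    by (intro nn_integral_cong) (auto simp: prod_emb_def indicator_def space_PiM)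
  finally show ?thesis by (simp add: emb)
qed


lemma cyl_ineq:
  fixes M0 :: "'a measure" and f :: "nat \<Rightarrow> 'a \<Rightarrow> real" and \<nu> :: "nat \<Rightarrow> 'a measure"
  assumes M0: "prob_space M0" and nu: "\<And>i. \<nu> i = density M0 (\<lambda>x. ennreal (f i x))"
    and Pnu: "\<And>i. prob_space (\<nu> i)" and fm[measurable]: "\<And>i. f i \<in> borel_measurable M0"
    and f0: "\<And>i x. f i x \<ge> 0"
    and fi: "\<And>i. integrable M0 (f i)" and f1: "\<And>i. (\<integral>x. f i x \<partial>M0) = 1"
    and si: "\<And>i. integrable M0 (\<lambda>x. sqrt (f i x))"
    and NM: "N \<le> M'" and X: "X \<in> sets (PiM {1..M'} (\<lambda>_. M0))"
  shows "measure (PiM {1..} \<nu>) (prod_emb {1..} (\<lambda>_. M0) {1..M'} X) \<le>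
     2 * measure (density (PiM {1..} (\<lambda>_. M0)) (\<lambda>x. ennreal (\<Prod>i\<in>{1..N}. f i (x i)))) (prod_emb {1..} (\<lambda>_. M0) {1..M'} X)
     + 4 * (1 - (\<Prod>i\<in>{N<..M'}. \<integral>y. sqrt (f i y) \<partial>M0))"
proof -
  define I :: "nat set" where "I = {1..}"
  define J :: "nat set" where "J = {1..M'}"
  define P0 where "P0 = PiM I (\<lambda>_. M0)"
  define G where "G = prod_emb I (\<lambda>_. M0) J X"
  define p where "p x = (\<Prod>i\<in>J. f i (x i))" for x :: "nat \<Rightarrow> 'a"
  define q where "q x = (\<Prod>i\<in>{1..N}. f i (x i))" for x :: "nat \<Rightarrow> 'a"
  define g where "g i = (\<lambda>y. if i \<le> N then f i y else sqrt (f i y))" for i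
  define s where "s x = (\<Prod>i\<in>J. g i (x i))" for x :: "nat \<Rightarrow> 'a"
  have JI: "finite J" "J \<subseteq> I" unfolding J_def I_def by auto
  have NJ: "{1..N} \<subseteq> J" "finite {1..N}" "{1..N} \<subseteq> I" unfolding J_def I_def using NM by auto
  have XJ: "X \<in> sets (PiM J (\<lambda>_. M0))" unfolding J_def using X .
  have GS: "G \<in> sets P0" unfolding G_def P0_def using X JI by (intro measurable_prod_emb) (auto simp: J_def)
  interpret P0: prob_space P0 unfolding P0_def by (rule prob_space_PiM) (rule M0)
  have gi: "integrable M0 (g i)" for i unfolding g_def using fi[of i] si[of i] by (cases "i \<le> N") simp_all
  have pi: "integrable P0 p" and pint: "integral\<^sup>L P0 p = 1"
    unfolding P0_def p_def using int_prod_inf[OF M0 JI fi] f1 by auto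
  have qi: "integrable P0 q" and qint: "integral\<^sup>L P0 q = 1"
    unfolding P0_def q_def using int_prod_inf[OF M0 NJ(2,3) fi] f1 by auto
  have si': "integrable P0 s" and sint: "integral\<^sup>L P0 s = (\<Prod>i\<in>J. integral\<^sup>L M0 (g i))"
    unfolding P0_def s_def using int_prod_inf[OF M0 JI gi] by auto
  have "(\<Prod>i\<in>J. integral\<^sup>L M0 (g i)) = (\<Prod>i\<in>{1..N} \<union> {N<..M'}. integral\<^sup>L M0 (g i))"
    unfolding J_def using NM by (intro prod.cong refl) auto
  also have "\<dots> = (\<Prod>i\<in>{1..N}. integral\<^sup>L M0 (g i)) * (\<Prod>i\<in>{N<..M'}. integral\<^sup>L M0 (g i))"
    by (intro prod.union_disjoint) auto
  also have "(\<Prod>i\<in>{1..N}. integral\<^sup>L M0 (g i)) = 1"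
    by (intro prod.neutral) (auto simp: g_def f1)
  also have "(\<Prod>i\<in>{N<..M'}. integral\<^sup>L M0 (g i)) = (\<Prod>i\<in>{N<..M'}. \<integral>y. sqrt (f i y) \<partial>M0)"
    by (intro prod.cong refl) (simp add: g_def)
  finally have sint2: "integral\<^sup>L P0 s = (\<Prod>i\<in>{N<..M'}. \<integral>y. sqrt (f i y) \<partial>M0)" using sint by simp
  have p0: "p x \<ge> 0" for x unfolding p_def by (intro prod_nonneg) (simp add: f0)
  have q0: "q x \<ge> 0" for x unfolding q_def by (intro prod_nonneg) (simp add: f0)
  have s0: "s x \<ge> 0" for x unfolding s_def g_def by (intro prod_nonneg) (simp add: f0)
  have ssq: "s x * s x = p x * q x" for x
  proof -
    have "s x * s x = (\<Prod>i\<in>J. g i (x i) * g i (x i))" unfolding s_def by (simp add: prod.distrib)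
    also have "\<dots> = (\<Prod>i\<in>J. f i (x i) * (if i \<le> N then f i (x i) else 1))"
      unfolding J_def g_def by (intro prod.cong refl) (auto simp: f0)
    also have "\<dots> = p x * (\<Prod>i\<in>J. if i \<le> N then f i (x i) else 1)"
      unfolding p_def by (simp add: prod.distrib)
    also have "(\<Prod>i\<in>J. if i \<le> N then f i (x i) else 1) = q x"
    proof -
      have "(\<Prod>i\<in>J. if i \<le> N then f i (x i) else 1) = (\<Prod>i\<in>{1..N} \<union> {N<..M'}. if i \<le> N then f i (x i) else 1)"
        unfolding J_def using NM by (intro prod.cong refl) auto
      also have "\<dots> = (\<Prod>i\<in>{1..N}. if i \<le> N then f i (x i) else 1) * (\<Prod>i\<in>{N<..M'}. if i \<le> N then f i (x i) else 1)"
        by (intro prod.union_disjoint) auto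
      also have "\<dots> = q x" unfolding q_def by simp
      finally show ?thesis .
    qed
    finally show ?thesis .
  qed
  have pw: "p x * indicator G x \<le> 2 * (q x * indicator G x) + 2 * (p x + q x - 2 * s x)" for x
  proof -
    have e: "sqrt (p x) * sqrt (q x) = s x" "sqrt (p x) * sqrt (p x) = p x" "sqrt (q x) * sqrt (q x) = q x"
      using ssq[of x] p0[of x] q0[of x] s0[of x]
      by (metis real_sqrt_mult real_sqrt_abs abs_of_nonneg power2_eq_square, simp, simp)
    have a: "0 \<le> p x + 4 * q x - 4 * s x"
    proof -
      have "0 \<le> (sqrt (p x) - 2 * sqrt (q x)) * (sqrt (p x) - 2 * sqrt (q x))" by simp
      also have "\<dots> = sqrt (p x) * sqrt (p x) - 4 * (sqrt (p x) * sqrt (q x)) + 4 * (sqrt (q x) * sqrt (q x))"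
        by (simp add: algebra_simps)
      finally show ?thesis using e by linarith
    qed
    have b: "0 \<le> p x + q x - 2 * s x"
    proof -
      have "0 \<le> (sqrt (p x) - sqrt (q x)) * (sqrt (p x) - sqrt (q x))" by simp
      also have "\<dots> = sqrt (p x) * sqrt (p x) - 2 * (sqrt (p x) * sqrt (q x)) + (sqrt (q x) * sqrt (q x))"
        by (simp add: algebra_simps)
      finally show ?thesis using e by linarith
    qed
    show ?thesis using a b by (cases "x \<in> G") auto
  qed
  have mP: "measure (PiM I \<nu>) G = (\<integral>x. p x * indicator G x \<partial>P0)"
  proof -
    have "emeasure (PiM I \<nu>) G = (\<integral>\<^sup>+x. (\<Prod>i\<in>J. ennreal (f i (x i))) * indicator G x \<partial>P0)"
      unfolding G_def P0_def by (rule emeasure_cyl[OF M0 nu Pnu fm f0 JI XJ])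
    also have "\<dots> = (\<integral>\<^sup>+x. ennreal (p x * indicator G x) \<partial>P0)"
      unfolding p_def by (intro nn_integral_cong) (simp add: prod_ennreal f0 indicator_def)
    also have "\<dots> = ennreal (\<integral>x. p x * indicator G x \<partial>P0)"
      using GS pi p0 by (intro nn_integral_eq_integral integrable_real_mult_indicator) auto
    finally show ?thesis unfolding measure_def
      using GS pi p0 by (simp add: integral_nonneg_AE)
  qed
  have mD: "measure (density P0 (\<lambda>x. ennreal (q x))) G = (\<integral>x. q x * indicator G x \<partial>P0)"
  proof -
    have qm: "q \<in> borel_measurable P0" using qi by auto
    have "emeasure (density P0 (\<lambda>x. ennreal (q x))) G = (\<integral>\<^sup>+x. ennreal (q x) * indicator G x \<partial>P0)"
      using GS qm by (intro emeasure_density) auto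
    also have "\<dots> = (\<integral>\<^sup>+x. ennreal (q x * indicator G x) \<partial>P0)"
      by (intro nn_integral_cong) (simp add: indicator_def)
    also have "\<dots> = ennreal (\<integral>x. q x * indicator G x \<partial>P0)"
      using GS qi q0 by (intro nn_integral_eq_integral integrable_real_mult_indicator) auto
    finally show ?thesis unfolding measure_def
      using GS qi q0 by (simp add: integral_nonneg_AE)
  qed
  have "(\<integral>x. p x * indicator G x \<partial>P0) \<le> (\<integral>x. 2 * (q x * indicator G x) + 2 * (p x + q x - 2 * s x) \<partial>P0)"
    using GS pi qi si' pw
    by (intro integral_mono integrable_real_mult_indicator) (auto intro!: integrable_add integrable_diff integrable_mult_right integrable_real_mult_indicator)
  also have "\<dots> = 2 * (\<integral>x. q x * indicator G x \<partial>P0) + 2 * (integral\<^sup>L P0 p + integral\<^sup>L P0 q - 2 * integral\<^sup>L P0 s)"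
    using GS pi qi si' by (simp add: integrable_real_mult_indicator)
  finally show ?thesis
    using mP mD pint qint sint2 unfolding G_def P0_def I_def J_def q_def by simp
qed


lemma approx_algebra:
  assumes G: "algebra \<Omega> G" and m1: "finite_measure \<mu>1" and m2: "finite_measure \<mu>2"
    and s1: "sets \<mu>1 = sigma_sets \<Omega> G" and s2: "sets \<mu>2 = sigma_sets \<Omega> G"
    and A: "A \<in> sigma_sets \<Omega> G"
  shows "\<forall>e>0. \<exists>B\<in>G. measure \<mu>1 ((A - B) \<union> (B - A)) + measure \<mu>2 ((A - B) \<union> (B - A)) < e"
proof -
  interpret G: algebra \<Omega> G by fact
  interpret m1: finite_measure \<mu>1 by fact
  interpret m2: finite_measure \<mu>2 by fact
  define s where "s S = measure \<mu>1 S + measure \<mu>2 S" for S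
  have s_mono: "s S \<le> s T" if "S \<subseteq> T" "T \<in> sigma_sets \<Omega> G" for S T
    unfolding s_def using that s1 s2 by (intro add_mono m1.finite_measure_mono m2.finite_measure_mono) auto
  have s_sub: "s (\<Union>i\<in>K. F i) \<le> (\<Sum>i\<in>K. s (F i))" if "finite K" "F ` K \<subseteq> sigma_sets \<Omega> G" for K F
  proof -
    have "s (\<Union>i\<in>K. F i) \<le> (\<Sum>i\<in>K. measure \<mu>1 (F i)) + (\<Sum>i\<in>K. measure \<mu>2 (F i))"
      unfolding s_def using that s1 s2
      by (intro add_mono m1.finite_measure_subadditive_finite m2.finite_measure_subadditive_finite) auto
    then show ?thesis by (simp add: s_def sum.distrib)
  qed
  have s_un: "s (S \<union> T) \<le> s S + s T" if "S \<in> sigma_sets \<Omega> G" "T \<in> sigma_sets \<Omega> G" for S T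
  proof -
    have "s (S \<union> T) \<le> (measure \<mu>1 S + measure \<mu>1 T) + (measure \<mu>2 S + measure \<mu>2 T)"
      unfolding s_def using that s1 s2
      by (intro add_mono measure_Un_le) auto
    then show ?thesis by (simp add: s_def)
  qed
  have GS: "G \<subseteq> sigma_sets \<Omega> G" by (auto intro: sigma_sets.Basic)
  interpret S: sigma_algebra \<Omega> "sigma_sets \<Omega> G" using sigma_algebra_sigma_sets[OF G.space_closed] .
  have "\<forall>e>0. \<exists>B\<in>G. s ((A - B) \<union> (B - A)) < e"
  proof -
  have IS: "Int_stable G" using G.Int by (auto simp: Int_stable_def)
  show ?thesis
    using IS G.space_closed A
  proof (induction rule: sigma_sets_induct_disjoint)
    case (basic A) then show ?case by (auto simp: s_def intro!: bexI[of _ A])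
  next
    case empty then show ?case by (auto simp: s_def intro!: bexI[of _ "{}"])
  next
    case (compl A)
    show ?case
    proof (intro allI impI)
      fix e :: real assume "e > 0"
      with compl.IH obtain B where B: "B \<in> G" "s ((A - B) \<union> (B - A)) < e" by blast
      have "A \<subseteq> \<Omega>" using compl.hyps sigma_sets_into_sp[OF G.space_closed] by blast
      moreover have "B \<subseteq> \<Omega>" using B G.space_closed by auto
      ultimately have "((\<Omega> - A) - (\<Omega> - B)) \<union> ((\<Omega> - B) - (\<Omega> - A)) = (A - B) \<union> (B - A)" by blast
      then show "\<exists>B\<in>G. s (((\<Omega> - A) - B) \<union> (B - (\<Omega> - A))) < e"
        using B by (intro bexI[of _ "\<Omega> - B"]) auto
    qed
  next
    case (union A)
    show ?case
    proof (intro allI impI)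
      fix e :: real assume e: "e > 0"
      define U where "U = (\<Union>i. A i)"
      define P where "P n = (\<Union>i<n. A i)" for n
      have Am: "A i \<in> sigma_sets \<Omega> G" for i using union.hyps by auto
      have Pm: "P n \<in> sigma_sets \<Omega> G" for n unfolding P_def using Am by auto
      have Um: "U \<in> sigma_sets \<Omega> G" unfolding U_def using Am by auto
      have incP: "incseq P" unfolding P_def incseq_def by (auto intro: order_less_le_trans)
      have UP: "(\<Union>n. P n) = U" unfolding P_def U_def by (auto intro: lessThan_iff[THEN iffD2, OF lessI])
      have "(\<lambda>n. s (P n)) \<longlonglongrightarrow> s U"
        unfolding s_def UP[symmetric]
        using Pm s1 s2 incP
        by (intro tendsto_add m1.finite_Lim_measure_incseq m2.finite_Lim_measure_incseq) auto
      then have "\<forall>\<^sub>F n in sequentially. s (P n) > s U - e/2"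
        using e by (intro order_tendstoD) auto
      then obtain n where n: "s (P n) > s U - e/2" by (auto dest: eventually_happens)
      have PU: "P n \<subseteq> U" unfolding P_def U_def by auto
      have sdiff: "s (U - P n) = s U - s (P n)"
        unfolding s_def using Pm Um s1 s2 PU
        by (simp add: m1.finite_measure_Diff m2.finite_measure_Diff)
      define d where "d = e / (2 * (real n + 1))"
      have d: "d > 0" using e by (simp add: d_def)
      have "\<forall>i. \<exists>B\<in>G. s ((A i - B) \<union> (B - A i)) < d" using union.IH d by blast
      then obtain B where B: "\<And>i. B i \<in> G" "\<And>i. s ((A i - B i) \<union> (B i - A i)) < d"
        by metis
      define B' where "B' = (\<Union>i<n. B i)"
      have B'G: "B' \<in> G" unfolding B'_def using B(1) by auto
      have Bm: "B i \<in> sigma_sets \<Omega> G" for i using B(1) GS by auto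
      have Dm: "(A i - B i) \<union> (B i - A i) \<in> sigma_sets \<Omega> G" for i using Am Bm by auto
      have sub: "(U - B') \<union> (B' - U) \<subseteq> (U - P n) \<union> (\<Union>i<n. (A i - B i) \<union> (B i - A i))"
        unfolding U_def B'_def P_def by blast
      have "s ((U - B') \<union> (B' - U)) \<le> s ((U - P n) \<union> (\<Union>i<n. (A i - B i) \<union> (B i - A i)))"
        using Um Pm Dm by (intro s_mono[OF sub]) auto
      also have "\<dots> \<le> s (U - P n) + s (\<Union>i<n. (A i - B i) \<union> (B i - A i))"
        using Um Pm Dm by (intro s_un) auto
      also have "s (\<Union>i<n. (A i - B i) \<union> (B i - A i)) \<le> (\<Sum>i<n. s ((A i - B i) \<union> (B i - A i)))"
        using Dm by (intro s_sub) auto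
      also have "\<dots> \<le> (\<Sum>i<n. d)" using B(2) by (intro sum_mono) (auto intro: less_imp_le)
      also have "\<dots> = real n * d" by simp
      also have "real n * d < e / 2" using e unfolding d_def by (simp add: field_simps)
      finally have "s ((U - B') \<union> (B' - U)) < e" using sdiff n by linarith
      then show "\<exists>B\<in>G. s ((\<Union>i. A i) - B \<union> (B - (\<Union>i. A i))) < e"
        using B'G unfolding U_def by blast
    qed
  qed
  qed
  then show ?thesis unfolding s_def .
qed


lemma sqrt_le_half: "a \<ge> 0 \<Longrightarrow> sqrt a \<le> (1 + a) / 2" for a :: real
proof -
  assume a: "a \<ge> 0"
  have "0 \<le> (sqrt a - 1) * (sqrt a - 1)" by simp
  also have "\<dots> = sqrt a * sqrt a - 2 * sqrt a + 1" by (simp add: algebra_simps)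
  also have "sqrt a * sqrt a = a" using a by simp
  finally show ?thesis by simp
qed

lemma one_minus_prod_le:
  fixes h :: "nat \<Rightarrow> real"
  assumes "finite S" "\<And>i. i \<in> S \<Longrightarrow> 0 \<le> h i \<and> h i \<le> 1"
  shows "1 - (\<Prod>i\<in>S. h i) \<le> (\<Sum>i\<in>S. 1 - h i) \<and> 0 \<le> (\<Prod>i\<in>S. h i) \<and> (\<Prod>i\<in>S. h i) \<le> 1"
  using assms
proof (induction S rule: finite_induct)
  case empty then show ?case by simp
next
  case (insert x F)
  then have IH: "1 - (\<Prod>i\<in>F. h i) \<le> (\<Sum>i\<in>F. 1 - h i)" "0 \<le> (\<Prod>i\<in>F. h i)" "(\<Prod>i\<in>F. h i) \<le> 1"
    by auto
  have hx: "0 \<le> h x" "h x \<le> 1" using insert by auto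
  have "0 \<le> (1 - h x) * (1 - (\<Prod>i\<in>F. h i))" using hx IH by simp
  then have "1 - h x * (\<Prod>i\<in>F. h i) \<le> (1 - h x) + (1 - (\<Prod>i\<in>F. h i))" by (simp add: algebra_simps)
  moreover have "h x * (\<Prod>i\<in>F. h i) \<le> 1" using hx IH by (simp add: mult_le_one)
  ultimately show ?case using insert IH hx by auto
qed


lemma arith_final:
  fixes pA pB dP dB dA dD pr t e :: real
  shows "pA \<le> pB + dP \<Longrightarrow> pB \<le> 2 * dB + 4 * (1 - pr) \<Longrightarrow> dB \<le> dA + dD \<Longrightarrow> dA = 0 \<Longrightarrow>
    1 - pr \<le> t \<Longrightarrow> dP + dD < e / 2 \<Longrightarrow> 0 \<le> dP \<Longrightarrow> 0 \<le> dD \<Longrightarrow> pA \<le> 4 * t + e"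
  by (simp add: algebra_simps)

theorem lemma1:
  fixes \<nu> :: "nat \<Rightarrow> real measure" and d :: "real measure \<Rightarrow> real measure \<Rightarrow> ereal"
  assumes "\<And>n. prob_on_unit (\<nu> n)"
    and "\<And>n. n \<ge> 1 \<Longrightarrow> absolutely_continuous (\<nu> 0) (\<nu> n)"
    and "class_D d"
    and "(\<Sum>n. d (\<nu> (Suc n)) (\<nu> 0)) < \<infinity>"
  shows "absolutely_continuous (\<Pi>\<^sub>M n\<in>{1..}. \<nu> 0) (\<Pi>\<^sub>M n\<in>{1..}. \<nu> n)"
proof -
  define M0 where "M0 = \<nu> 0"
  have Pn: "prob_space (\<nu> n)" and sn: "sets (\<nu> n) = sets M0" for n
    using assms(1)[of n] assms(1)[of 0] unfolding prob_on_unit_def M0_def by auto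
  interpret M0: prob_space M0 using Pn[of 0] M0_def by simp
  have PM0: "prob_space M0" by (rule M0.prob_space_axioms)
  have ac: "absolutely_continuous M0 (\<nu> n)" for n
    using assms(2)[of n] by (cases "n = 0") (auto simp: M0_def absolutely_continuous_def)
  define f where "f n x = enn2real (RN_deriv M0 (\<nu> n) x)" for n x
  have fm[measurable]: "f n \<in> borel_measurable M0" for n unfolding f_def by simp
  have f0: "f n x \<ge> 0" for n x unfolding f_def by simp
  have nu: "\<nu> n = density M0 (\<lambda>x. ennreal (f n x))" for n
  proof -
    have "\<nu> n = density M0 (RN_deriv M0 (\<nu> n))" using M0.density_RN_deriv[OF ac sn] by simp
    also have "\<dots> = density M0 (\<lambda>x. ennreal (f n x))"
    proof (rule density_cong)
      show "RN_deriv M0 (\<nu> n) \<in> borel_measurable M0" by simp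
      show "(\<lambda>x. ennreal (f n x)) \<in> borel_measurable M0" by simp
      show "AE x in M0. RN_deriv M0 (\<nu> n) x = ennreal (f n x)"
        using M0.RN_deriv_finite[OF prob_space_imp_sigma_finite[OF Pn] ac sn]
        by eventually_elim (simp add: f_def ennreal_enn2real_if)
    qed
    finally show ?thesis .
  qed
  have fnn: "(\<integral>\<^sup>+x. ennreal (f n x) \<partial>M0) = 1" for n
  proof -
    have "emeasure (density M0 (\<lambda>x. ennreal (f n x))) (space M0) = (\<integral>\<^sup>+x. ennreal (f n x) * indicator (space M0) x \<partial>M0)"
      by (rule emeasure_density) auto
    also have "\<dots> = (\<integral>\<^sup>+x. ennreal (f n x) \<partial>M0)"
      by (intro nn_integral_cong) (simp add: indicator_def)
    finally have "(\<integral>\<^sup>+x. ennreal (f n x) \<partial>M0) = emeasure (\<nu> n) (space M0)" using nu[of n] by simp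
    also have "\<dots> = 1" using prob_space.emeasure_space_1[OF Pn[of n]] sets_eq_imp_space_eq[OF sn[of n]] by simp
    finally show ?thesis .
  qed
  have fi: "integrable M0 (f n)" for n
    by (rule integrableI_nn_integral_finite[of _ _ 1]) (auto simp: fnn f0)
  have f1: "(\<integral>x. f n x \<partial>M0) = 1" for n
    by (subst integral_eq_nn_integral) (auto simp: fnn f0)
  have si: "integrable M0 (\<lambda>x. sqrt (f n x))" for n
  proof (rule Bochner_Integration.integrable_bound[where f="\<lambda>x. 1 + f n x"])
    show "integrable M0 (\<lambda>x. 1 + f n x)" using fi[of n] by auto
    show "(\<lambda>x. sqrt (f n x)) \<in> borel_measurable M0" by simp
    show "AE x in M0. norm (sqrt (f n x)) \<le> norm (1 + f n x)"
    proof (intro AE_I2)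
      fix x have "sqrt (f n x) \<le> (1 + f n x) / 2" by (rule sqrt_le_half[OF f0])
      then show "norm (sqrt (f n x)) \<le> norm (1 + f n x)" using f0[of n x] by simp
    qed
  qed
  define h where "h n = (\<integral>y. sqrt (f n y) \<partial>M0)" for n
  have h0: "0 \<le> h n" for n unfolding h_def by (intro integral_nonneg_AE AE_I2) (simp add: f0)
  have h1: "h n \<le> 1" for n
  proof -
    have "h n \<le> (\<integral>x. (1 + f n x) / 2 \<partial>M0)"
      unfolding h_def
    proof (rule integral_mono)
      show "integrable M0 (\<lambda>x. sqrt (f n x))" by (rule si)
      show "integrable M0 (\<lambda>x. (1 + f n x) / 2)" using fi[of n] by auto
      fix x show "sqrt (f n x) \<le> (1 + f n x) / 2" by (rule sqrt_le_half[OF f0])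
    qed
    also have "\<dots> = (1 + 1) / 2" using fi[of n] f1[of n] M0.prob_space by simp
    finally show ?thesis by simp
  qed
  have hH: "hellinger (\<nu> n) M0 = h n" for n
  proof -
    have "hellinger (\<nu> n) M0 = enn2real (\<integral>\<^sup>+x. ennreal (sqrt (f n x)) \<partial>M0)"
      by (rule hellinger_density[OF PM0 fm f0 nu Pn])
    also have "\<dots> = h n" unfolding h_def by (subst integral_eq_nn_integral) (auto simp: f0)
    finally show ?thesis .
  qed
  from assms(3) obtain C where C: "C > 0" and HC: "\<And>\<mu> \<mu>'. prob_on_unit \<mu> \<Longrightarrow> prob_on_unit \<mu>' \<Longrightarrow>
        ereal (1 - hellinger \<mu> \<mu>') \<le> ereal C * d \<mu> \<mu>'"
    unfolding class_D_def by blast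
  have dpos: "0 \<le> d (\<nu> n) (\<nu> m)" for n m
    using assms(3) assms(1)[of n] assms(1)[of m] unfolding class_D_def is_divergence_def is_distance_def
    by blast
  define a where "a n = 1 - h (Suc n)" for n
  have a0: "0 \<le> a n" for n unfolding a_def using h1 by simp
  have aE: "ereal (a n) \<le> ereal C * d (\<nu> (Suc n)) (\<nu> 0)" for n
    using HC[OF assms(1)[of "Suc n"] assms(1)[of 0]] hH[of "Suc n"] unfolding a_def M0_def by simp
  have "(\<Sum>n. ereal (a n)) \<le> (\<Sum>n. ereal C * d (\<nu> (Suc n)) (\<nu> 0))"
    by (rule suminf_le_pos) (use aE a0 in auto)
  also have "\<dots> = ereal C * (\<Sum>n. d (\<nu> (Suc n)) (\<nu> 0))"
    by (rule suminf_cmult_ereal) (use dpos C in auto)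
  also have "\<dots> < \<infinity>"
  proof -
    have s0: "0 \<le> (\<Sum>n. d (\<nu> (Suc n)) (\<nu> 0))" by (rule suminf_0_le) (use dpos in auto)
    obtain r where "(\<Sum>n. d (\<nu> (Suc n)) (\<nu> 0)) = ereal r" using s0 assms(4) by (cases "(\<Sum>n. d (\<nu> (Suc n)) (\<nu> 0))") auto
    then show ?thesis by simp
  qed
  finally have "(\<Sum>n. ereal (a n)) \<noteq> \<infinity>" by simp
  then have suma: "summable a"
    using summable_real_of_ereal[of "\<lambda>n. ereal (a n)"] a0 by simp
  define T where "T N = suminf a - (\<Sum>n<N. a n)" for N
  have Tlim: "T \<longlonglongrightarrow> 0"
  proof -
    have "(\<lambda>N. suminf a - (\<Sum>n<N. a n)) \<longlonglongrightarrow> suminf a - suminf a"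
      by (intro tendsto_diff tendsto_const summable_LIMSEQ suma)
    then show ?thesis unfolding T_def by simp
  qed
  have Tb: "1 - (\<Prod>i\<in>{N<..M'}. h i) \<le> T N" if "N \<le> M'" for N M'
  proof -
    have "1 - (\<Prod>i\<in>{N<..M'}. h i) \<le> (\<Sum>i\<in>{N<..M'}. 1 - h i)"
      using one_minus_prod_le[of "{N<..M'}" h] h0 h1 by auto
    also have "(\<Sum>i\<in>{N<..M'}. 1 - h i) = (\<Sum>n\<in>{N..<M'}. a n)"
    proof -
      have "{N<..M'} = Suc ` {N..<M'}" by (auto simp: image_iff)
      moreover have "(\<Sum>i\<in>Suc ` {N..<M'}. 1 - h i) = (\<Sum>n\<in>{N..<M'}. 1 - h (Suc n))"
        by (rule sum.reindex_cong[of Suc]) auto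
      ultimately show ?thesis unfolding a_def by simp
    qed
    also have "\<dots> \<le> T N"
    proof -
      have "(\<Sum>n<N. a n) + (\<Sum>n\<in>{N..<M'}. a n) = (\<Sum>n<M'. a n)"
        using that by (simp add: lessThan_atLeast0 sum.atLeastLessThan_concat)
      moreover have "(\<Sum>n<M'. a n) \<le> suminf a"
        using suma a0 by (intro sum_le_suminf) auto
      ultimately show ?thesis unfolding T_def by simp
    qed
    finally show ?thesis .
  qed
  define I :: "nat set" where "I = {1..}"
  define P0 where "P0 = PiM I (\<lambda>_. M0)"
  define P where "P = PiM I \<nu>"
  interpret PI: product_prob_space "\<lambda>_. M0" I
    unfolding product_prob_space_def product_sigma_finite_def product_prob_space_axioms_def
    using PM0 prob_space_imp_sigma_finite by blast
  interpret PP: prob_space P unfolding P_def by (rule prob_space_PiM) (rule Pn)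
  have sP: "sets P = sets P0" unfolding P_def P0_def by (intro sets_PiM_cong) (auto simp: sn)
  have "null_sets P0 \<subseteq> null_sets P"
  proof
    fix A assume A: "A \<in> null_sets P0"
    have AS: "A \<in> sets P0" using A by auto
    have bound: "measure P A \<le> 4 * T N" for N
    proof -
      define q where "q x = (\<Prod>i\<in>{1..N}. f i (x i))" for x :: "nat \<Rightarrow> real"
      define DN where "DN = density P0 (\<lambda>x. ennreal (q x))"
      have NI: "finite {1..N}" "{1..N} \<subseteq> I" unfolding I_def by auto
      have qi: "integrable P0 q" and qint: "integral\<^sup>L P0 q = 1"
        unfolding P0_def q_def using int_prod_inf[OF PM0 NI fi] f1 by auto
      have q0: "q x \<ge> 0" for x unfolding q_def by (intro prod_nonneg) (simp add: f0)
      have qm: "q \<in> borel_measurable P0" using qi by auto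
      have sDN: "sets DN = sets P0" unfolding DN_def by simp
      have "emeasure DN (space DN) = (\<integral>\<^sup>+x. ennreal (q x) * indicator (space P0) x \<partial>P0)"
        unfolding DN_def using qm by (subst emeasure_density) auto
      also have "\<dots> = (\<integral>\<^sup>+x. ennreal (q x) \<partial>P0)"
        by (intro nn_integral_cong) (simp add: indicator_def)
      also have "\<dots> = 1" using nn_integral_eq_integral[OF qi] q0 qint by simp
      finally interpret DN: finite_measure DN by (intro finite_measureI) simp
      have DNA: "measure DN A = 0"
      proof -
        have "emeasure DN A = (\<integral>\<^sup>+x. ennreal (q x) * indicator A x \<partial>P0)"
          unfolding DN_def using qm AS by (subst emeasure_density) auto
        also have "\<dots> = 0" using A by (rule nn_integral_null_set)
        finally show ?thesis by (simp add: measure_def)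
      qed
      have gen: "\<forall>e>0. \<exists>B\<in>PI.generator. measure P ((A - B) \<union> (B - A)) + measure DN ((A - B) \<union> (B - A)) < e"
      proof (rule approx_algebra[OF PI.algebra_generator])
        show "finite_measure P" by (rule PP.finite_measure_axioms)
        show "finite_measure DN" by (rule DN.finite_measure_axioms)
        show "sets P = sigma_sets (space (Pi\<^sub>M I (\<lambda>_. M0))) PI.generator"
          using sP PI.sets_PiM_generator unfolding P0_def by simp
        show "sets DN = sigma_sets (space (Pi\<^sub>M I (\<lambda>_. M0))) PI.generator"
          using sDN PI.sets_PiM_generator unfolding P0_def by simp
        show "A \<in> sigma_sets (space (Pi\<^sub>M I (\<lambda>_. M0))) PI.generator"
          using AS PI.sets_PiM_generator unfolding P0_def by simp
      qed
      have "measure P A \<le> 4 * T N + e" if e: "e > 0" for e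
      proof -
        obtain B where B: "B \<in> PI.generator"
          and Bd: "measure P ((A - B) \<union> (B - A)) + measure DN ((A - B) \<union> (B - A)) < e / 2"
          using gen e by (meson half_gt_zero)
        from B obtain J X where J: "finite J" "J \<subseteq> I" and X: "X \<in> sets (PiM J (\<lambda>_. M0))"
          and BJ: "B = prod_emb I (\<lambda>_. M0) J X"
          by (auto elim!: PI.generator.cases)
        define M' where "M' = N + Max (insert 0 J)"
        have NM: "N \<le> M'" unfolding M'_def by simp
        have JM: "J \<subseteq> {1..M'}"
        proof
          fix j assume "j \<in> J"
          then have "1 \<le> j" using J unfolding I_def by auto
          moreover have "j \<le> Max (insert 0 J)" using \<open>j \<in> J\<close> J by simp
          ultimately show "j \<in> {1..M'}" unfolding M'_def by simp
        qed
        have MI: "{1..M'} \<subseteq> I" unfolding I_def by auto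
        define X' where "X' = prod_emb {1..M'} (\<lambda>_. M0) J X"
        have X': "X' \<in> sets (PiM {1..M'} (\<lambda>_. M0))" unfolding X'_def using JM X by (intro measurable_prod_emb) auto
        have BX: "B = prod_emb I (\<lambda>_. M0) {1..M'} X'" unfolding BJ X'_def using JM MI by simp
        have BS: "B \<in> sets P0" unfolding BJ P0_def using J X by (intro measurable_prod_emb) auto
        have DS: "(A - B) \<union> (B - A) \<in> sets P0" using AS BS by auto
        have ci: "measure P B \<le> 2 * measure DN B + 4 * (1 - (\<Prod>i\<in>{N<..M'}. h i))"
          using cyl_ineq[OF PM0 nu Pn fm f0 fi f1 si NM X'] unfolding BX P_def DN_def P0_def q_def h_def I_def .
        have mPA: "measure P A \<le> measure P B + measure P ((A - B) \<union> (B - A))"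
        proof -
          have "measure P A \<le> measure P (B \<union> ((A - B) \<union> (B - A)))"
            using AS BS DS sP by (intro PP.finite_measure_mono) auto
          also have "\<dots> \<le> measure P B + measure P ((A - B) \<union> (B - A))"
            using BS DS sP by (intro measure_Un_le) auto
          finally show ?thesis .
        qed
        have mDB: "measure DN B \<le> measure DN A + measure DN ((A - B) \<union> (B - A))"
        proof -
          have "measure DN B \<le> measure DN (A \<union> ((A - B) \<union> (B - A)))"
            using AS BS DS sDN by (intro DN.finite_measure_mono) auto
          also have "\<dots> \<le> measure DN A + measure DN ((A - B) \<union> (B - A))"
            using AS DS sDN by (intro measure_Un_le) auto
          finally show ?thesis .
        qed
        have "0 \<le> measure P ((A - B) \<union> (B - A))" "0 \<le> measure DN ((A - B) \<union> (B - A))" by auto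
        note nn = this
        show ?thesis by (rule arith_final[OF mPA ci mDB DNA Tb[OF NM] Bd nn])
      qed
      then show ?thesis by (rule field_le_epsilon)
    qed
    have "measure P A \<le> 0"
    proof (rule tendsto_le[OF sequentially_bot])
      show "(\<lambda>N. 4 * T N) \<longlonglongrightarrow> 0" using tendsto_mult[OF tendsto_const[of 4] Tlim] by simp
      show "((\<lambda>N. measure P A) \<longlongrightarrow> measure P A) sequentially" by (rule tendsto_const)
      show "\<forall>\<^sub>F N in sequentially. measure P A \<le> 4 * T N" by (intro always_eventually allI bound)
    qed
    then have "measure P A = 0" using measure_nonneg[of P A] by linarith
    then have "emeasure P A = 0" by (simp add: PP.emeasure_eq_measure)
    then show "A \<in> null_sets P" using AS sP by auto
  qed
  then show ?thesis unfolding absolutely_continuous_def P0_def P_def I_def M0_def .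
qed


end
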